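(* Let $\Sigma=(\mathbb{N}_0,X,U,\mathscr{U},\phi)$ be a control system as in the standing setup and let $Q\subset X$ be a nonempty compact set. Then $Q$ is finitely equi-invariant in the mean if and only if $Q$ has bounded invariance complexity in the mean.
   Context: Standing setup: $(X,d)$ is a metric space, $U$ is a compact metric space, and $F:X\times U\to X$ is a map such that $F_u:=F(\cdot,u)$ is continuous for every $u\in U$. Let $\mathscr U=U^{\mathbb N_0}$ with the product topology. For $\omega=(\omega_0,\omega_1,\dots)\in\mathscr U$, $x\in X$, set $\phi(0,x,\omega)=x$ and $\phi(k,x,\omega)=F_{\omega_{k-1}}\circ\cdots\circ F_{\omega_0}(x)$ for $k\ge1$. It is assumed that $\phi:\mathbb N_0\times X\times\mathscr U\to X$ is continuous. Notation: $\mathbb N=\{1,2,\dots\}$; $B(x,\delta)$ is the open ball; $d(y,Q)=\inf_{q\in Q}d(y,q)$. Finite equi-invariance in the mean: a point $x\in Q$ is a finitely equi-invariant point in the mean of $Q$ if for every $\varepsilon>0$ there exist $\delta>0$ and a finite set $F\subset\mathscr U$ such that for every $y\in B(x,\delta)\cap Q$ there is $\omega\in F$ with $\frac1n\sum_{i=0}^{n-1}d(\phi(i,y,\omega),Q)<\varepsilon$ for all $n\in\mathbb N$. $Q$ is finitely equi-invariant in the mean if every point of $Q$ is such a point. Invariance complexity in the mean: for $\omega\in\mathscr U$, $n\in\mathbb N$, $\varepsilon>0$ let $\hat Q^\varepsilon_{n,\omega}=\{x\in Q:\max_{1\le k\le n}\frac1k\sum_{i=0}^{k-1}d(\phi(i,x,\omega),Q)<\varepsilon\}$.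 A set $F\subset\mathscr U$ is $(n,\varepsilon,Q)$-spanning in the mean if $Q=\bigcup_{\omega\in F}\hat Q^\varepsilon_{n,\omega}$, and $\hat r_{inv}(n,\varepsilon,Q)$ is the minimal cardinality of such a set ($=\infty$ if none exists). $Q$ has bounded invariance complexity in the mean if for every $\varepsilon>0$ there is $C>0$ with $\hat r_{inv}(n,\varepsilon,Q)\le C$ for all $n\in\mathbb N$. *)

theory Defs
  imports "HOL-Analysis.Analysis"
begin

(* The control range U is a compact subset of a metric type 'u; the state space X is the
   whole metric type 'x.  Controls are sequences nat \<Rightarrow> 'u with values in U, carrying the
   product topology (Function_Topology instance on nat \<Rightarrow> 'u). *)

definition ctrl :: "'u set \<Rightarrow> (nat \<Rightarrow> 'u) set" where
  "ctrl U = {\<omega>. \<forall>i. \<omega> i \<in> U}"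

primrec phi :: "('x \<Rightarrow> 'u \<Rightarrow> 'x) \<Rightarrow> nat \<Rightarrow> 'x \<Rightarrow> (nat \<Rightarrow> 'u) \<Rightarrow> 'x" where
  "phi F 0 x \<omega> = x"
| "phi F (Suc k) x \<omega> = F (phi F k x \<omega>) (\<omega> k)"

definition avg_dist ::
  "('x::metric_space \<Rightarrow> 'u \<Rightarrow> 'x) \<Rightarrow> 'x set \<Rightarrow> nat \<Rightarrow> 'x \<Rightarrow> (nat \<Rightarrow> 'u) \<Rightarrow> real" where
  "avg_dist F Q n y \<omega> = (1 / real n) * (\<Sum>i<n. infdist (phi F i y \<omega>) Q)"

definition fin_equi_inv_mean_point ::
  "('x::metric_space \<Rightarrow> 'u \<Rightarrow> 'x) \<Rightarrow> 'u set \<Rightarrow> 'x set \<Rightarrow> 'x \<Rightarrow> bool" where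
  "fin_equi_inv_mean_point F U Q x \<longleftrightarrow> x \<in> Q \<and>
     (\<forall>\<epsilon>>0. \<exists>\<delta>>0. \<exists>S. finite S \<and> S \<subseteq> ctrl U \<and>
        (\<forall>y \<in> ball x \<delta> \<inter> Q. \<exists>\<omega>\<in>S. \<forall>n\<ge>1. avg_dist F Q n y \<omega> < \<epsilon>))"

definition fin_equi_inv_mean ::
  "('x::metric_space \<Rightarrow> 'u \<Rightarrow> 'x) \<Rightarrow> 'u set \<Rightarrow> 'x set \<Rightarrow> bool" where
  "fin_equi_inv_mean F U Q \<longleftrightarrow> (\<forall>x\<in>Q. fin_equi_inv_mean_point F U Q x)"

definition Qhat ::
  "('x::metric_space \<Rightarrow> 'u \<Rightarrow> 'x) \<Rightarrow> 'x set \<Rightarrow> nat \<Rightarrow> real \<Rightarrow> (nat \<Rightarrow> 'u) \<Rightarrow> 'x set" where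
  "Qhat F Q n \<epsilon> \<omega> = {x \<in> Q. Max ((\<lambda>k. avg_dist F Q k x \<omega>) ` {1..n}) < \<epsilon>}"

definition spanning_mean ::
  "('x::metric_space \<Rightarrow> 'u \<Rightarrow> 'x) \<Rightarrow> 'u set \<Rightarrow> nat \<Rightarrow> real \<Rightarrow> 'x set \<Rightarrow> (nat \<Rightarrow> 'u) set \<Rightarrow> bool" where
  "spanning_mean F U n \<epsilon> Q S \<longleftrightarrow> S \<subseteq> ctrl U \<and> Q = (\<Union>\<omega>\<in>S. Qhat F Q n \<epsilon> \<omega>)"

definition r_inv_mean ::
  "('x::metric_space \<Rightarrow> 'u \<Rightarrow> 'x) \<Rightarrow> 'u set \<Rightarrow> nat \<Rightarrow> real \<Rightarrow> 'x set \<Rightarrow> ereal" where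
  "r_inv_mean F U n \<epsilon> Q =
     (INF S \<in> {S. spanning_mean F U n \<epsilon> Q S}. if finite S then ereal (real (card S)) else \<infinity>)"

definition bounded_inv_complexity_mean ::
  "('x::metric_space \<Rightarrow> 'u \<Rightarrow> 'x) \<Rightarrow> 'u set \<Rightarrow> 'x set \<Rightarrow> bool" where
  "bounded_inv_complexity_mean F U Q \<longleftrightarrow>
     (\<forall>\<epsilon>>0. \<exists>C>0. \<forall>n\<ge>1. r_inv_mean F U n \<epsilon> Q \<le> ereal C)"

end

theory Submission imports Defs begin

lemma Qhat_iff: assumes "n \<ge> 1"
  shows "x \<in> Qhat F Q n \<epsilon> \<omega> \<longleftrightarrow> x \<in> Q \<and> (\<forall>k\<in>{1..n}. avg_dist F Q k x \<omega> < \<epsilon>)"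
  using assms by (auto simp: Qhat_def)

lemma r_inv_le:
  assumes "r_inv_mean F U n \<epsilon> Q \<le> ereal C"
  shows "\<exists>S. spanning_mean F U n \<epsilon> Q S \<and> finite S \<and> real (card S) \<le> C"
proof (rule ccontr)
  assume H: "\<not> ?thesis"
  have "ereal ((real_of_int (floor C) + 1)) \<le> r_inv_mean F U n \<epsilon> Q"
    unfolding r_inv_mean_def
  proof (rule INF_greatest)
    fix S assume "S \<in> {S. spanning_mean F U n \<epsilon> Q S}"
    with H show "ereal ((real_of_int (floor C) + 1)) \<le> (if finite S then ereal (real (card S)) else \<infinity>)"
    proof (cases "finite S")
      case True
      with H \<open>S \<in> _\<close> have "C < real (card S)" by auto
      hence "floor C < int (card S)" by (simp add: floor_less_iff)
      hence "real_of_int (floor C) + 1 \<le> real (card S)" by linarith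
      with True show ?thesis by simp
    qed simp
  qed
  moreover have "ereal C < ereal ((real_of_int (floor C) + 1))" by simp
  ultimately show False using assms by (metis leD order_trans)
qed

lemma avg_tendsto:
  assumes cont: "\<forall>k. continuous_on (UNIV \<times> ctrl U) (\<lambda>(x, \<omega>). phi F k x \<omega>)"
    and lim: "W \<longlonglongrightarrow> \<Omega>" and W: "\<And>m. W m \<in> ctrl U" and O: "\<Omega> \<in> ctrl U"
  shows "(\<lambda>m. avg_dist F Q k y (W m)) \<longlonglongrightarrow> avg_dist F Q k y \<Omega>"
proof -
  have "(\<lambda>m. phi F i y (W m)) \<longlonglongrightarrow> phi F i y \<Omega>" for i
  proof -
    have "((\<lambda>m. (y, W m)) \<longlongrightarrow> (y, \<Omega>)) sequentially"
      using lim by (intro tendsto_Pair) auto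
    from continuous_on_tendsto_compose[OF cont[rule_format, of i] this]
    show ?thesis using W O by auto
  qed
  then show ?thesis unfolding avg_dist_def
    by (intro tendsto_mult tendsto_const tendsto_sum tendsto_infdist) auto
qed

lemma ctrl_compact: assumes "compact (U::'u::metric_space set)" shows "compact (ctrl U)"
proof -
  have e: "ctrl U = PiE UNIV (\<lambda>_. U)" by (auto simp: ctrl_def PiE_def extensional_def)
  have "compactin (product_topology (\<lambda>_. euclidean) UNIV) (PiE UNIV (\<lambda>_. U))"
    using assms by (simp add: compactin_PiE)
  then show ?thesis unfolding e euclidean_product_topology by simp
qed
lemma comp_cont: "continuous_on UNIV (\<lambda>Z::nat\<Rightarrow>'u::topological_space. (\<lambda>i. Z (prod_encode (j,i))))"
  by (intro continuous_on_coordinatewise_then_product continuous_on_product_coordinates)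

theorem mainTheorem2:
  fixes F :: "'x::metric_space \<Rightarrow> 'u::metric_space \<Rightarrow> 'x"
    and U :: "'u set" and Q :: "'x set"
  assumes "compact U"
    and "\<forall>u\<in>U. continuous_on UNIV (\<lambda>x. F x u)"
    and "\<forall>k. continuous_on (UNIV \<times> ctrl U) (\<lambda>(x, \<omega>). phi F k x \<omega>)"
    and "compact Q" and "Q \<noteq> {}"
  shows "fin_equi_inv_mean F U Q \<longleftrightarrow> bounded_inv_complexity_mean F U Q"
proof
  assume fe: "fin_equi_inv_mean F U Q"
  show "bounded_inv_complexity_mean F U Q"
    unfolding bounded_inv_complexity_mean_def
  proof (intro allI impI)
    fix \<epsilon> :: real assume "\<epsilon> > 0"
    have "\<forall>x\<in>Q. \<exists>\<delta>. \<delta> > 0 \<and> (\<exists>S. finite S \<and> S \<subseteq> ctrl U \<and>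
        (\<forall>y \<in> ball x \<delta> \<inter> Q. \<exists>\<omega>\<in>S. \<forall>n\<ge>1. avg_dist F Q n y \<omega> < \<epsilon>))"
      using fe \<open>\<epsilon> > 0\<close> unfolding fin_equi_inv_mean_def fin_equi_inv_mean_point_def by blast
    then obtain \<delta> where d: "\<forall>x\<in>Q. \<delta> x > 0 \<and> (\<exists>S. finite S \<and> S \<subseteq> ctrl U \<and>
        (\<forall>y \<in> ball x (\<delta> x) \<inter> Q. \<exists>\<omega>\<in>S. \<forall>n\<ge>1. avg_dist F Q n y \<omega> < \<epsilon>))"
      by (metis (no_types))
    then obtain SS where SS: "\<forall>x\<in>Q. finite (SS x) \<and> SS x \<subseteq> ctrl U \<and>
        (\<forall>y \<in> ball x (\<delta> x) \<inter> Q. \<exists>\<omega>\<in>SS x. \<forall>n\<ge>1. avg_dist F Q n y \<omega> < \<epsilon>)"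
      by metis
    have "Q \<subseteq> (\<Union>x\<in>Q. ball x (\<delta> x))" using d by force
    then obtain D where D: "D \<subseteq> Q" "finite D" "Q \<subseteq> (\<Union>x\<in>D. ball x (\<delta> x))"
      using compactE_image[OF \<open>compact Q\<close>, of Q "\<lambda>x. ball x (\<delta> x)"] by blast
    define T where "T = (\<Union>x\<in>D. SS x)"
    have Tf: "finite T" using D SS unfolding T_def by blast
    have Tc: "T \<subseteq> ctrl U" using D SS unfolding T_def by blast
    show "\<exists>C>0. \<forall>n\<ge>1. r_inv_mean F U n \<epsilon> Q \<le> ereal C"
    proof (intro exI[of _ "real (card T) + 1"] conjI allI impI)
      fix n :: nat assume n: "n \<ge> 1"
      have sp: "spanning_mean F U n \<epsilon> Q T"
        unfolding spanning_mean_def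
      proof (intro conjI Tc equalityI subsetI)
        fix y assume y: "y \<in> Q"
        then obtain x where x: "x \<in> D" "y \<in> ball x (\<delta> x)" using D by blast
        then obtain \<omega> where "\<omega> \<in> SS x" "\<forall>n\<ge>1. avg_dist F Q n y \<omega> < \<epsilon>"
          using SS D y by blast
        then show "y \<in> (\<Union>\<omega>\<in>T. Qhat F Q n \<epsilon> \<omega>)"
          using x y n unfolding T_def by (auto simp: Qhat_iff intro!: bexI[of _ x] bexI[of _ \<omega>])
      qed (auto simp: Qhat_def)
      have "r_inv_mean F U n \<epsilon> Q \<le> ereal (real (card T))"
        unfolding r_inv_mean_def using sp Tf by (intro INF_lower2[of T]) auto
      then show "r_inv_mean F U n \<epsilon> Q \<le> ereal (real (card T) + 1)"
        by (meson ereal_less_eq(3) le_add_same_cancel1 order_trans zero_le_one)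
    qed simp
  qed
next
  assume bc: "bounded_inv_complexity_mean F U Q"
  show "fin_equi_inv_mean F U Q"
    unfolding fin_equi_inv_mean_def fin_equi_inv_mean_point_def
  proof (intro ballI conjI)
    fix x assume "x \<in> Q" then show "x \<in> Q" .
  next
    fix x assume "x \<in> Q"
    show "\<forall>\<epsilon>>0. \<exists>\<delta>>0. \<exists>S. finite S \<and> S \<subseteq> ctrl U \<and>
        (\<forall>y \<in> ball x \<delta> \<inter> Q. \<exists>\<omega>\<in>S. \<forall>n\<ge>1. avg_dist F Q n y \<omega> < \<epsilon>)"
    proof (intro allI impI)
      fix \<epsilon> :: real assume "\<epsilon> > 0"
      then obtain C where "C > 0" and C: "\<forall>n\<ge>1. r_inv_mean F U n (\<epsilon>/2) Q \<le> ereal C"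
        using bc unfolding bounded_inv_complexity_mean_def by (meson half_gt_zero)
      define N where "N = nat (floor C)"
      have "\<forall>m. \<exists>S. spanning_mean F U (Suc m) (\<epsilon>/2) Q S \<and> finite S \<and> real (card S) \<le> C"
        using C r_inv_le by (metis Suc_le_mono le0 One_nat_def)
      then obtain SS where SS: "\<And>m. spanning_mean F U (Suc m) (\<epsilon>/2) Q (SS m)"
        "\<And>m. finite (SS m)" "\<And>m. real (card (SS m)) \<le> C" by metis
      have "\<forall>m. \<exists>xs. set xs = SS m \<and> distinct xs" using SS(2) finite_distinct_list by blast
      then obtain L where L: "\<And>m. set (L m) = SS m" "\<And>m. distinct (L m)" by metis
      have lenN: "length (L m) \<le> N" for m
      proof -
        have "length (L m) = card (SS m)" using L distinct_card by metis
        then show ?thesis using SS(3)[of m] unfolding N_def by linarith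
      qed
      have SSne: "SS m \<noteq> {}" for m
        using SS(1)[of m] \<open>Q \<noteq> {}\<close> unfolding spanning_mean_def by auto
      define W where "W m j = (if j < length (L m) then L m ! j else hd (L m))" for m j
      have WS: "W m j \<in> SS m" for m j
        using SSne[of m] L[of m] unfolding W_def
        by (metis hd_in_set nth_mem set_empty)
      have Wc: "W m j \<in> ctrl U" for m j using WS SS(1) unfolding spanning_mean_def by blast
      have cover: "\<exists>j<N. y \<in> Qhat F Q (Suc m) (\<epsilon>/2) (W m j)" if "y \<in> Q" for y m
      proof -
        from that SS(1)[of m] obtain \<omega> where "\<omega> \<in> SS m" "y \<in> Qhat F Q (Suc m) (\<epsilon>/2) \<omega>"
          unfolding spanning_mean_def by blast
        then obtain j where "j < length (L m)" "\<omega> = L m ! j" using L(1) by (metis in_set_conv_nth)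
        then show ?thesis using lenN[of m] \<open>y \<in> Qhat F Q (Suc m) (\<epsilon>/2) \<omega>\<close>
          by (intro exI[of _ j]) (auto simp: W_def)
      qed
      define Z where "Z m = (\<lambda>p. W m (fst (prod_decode p)) (snd (prod_decode p)))" for m
      have Zc: "Z m \<in> ctrl U" for m using Wc unfolding Z_def ctrl_def by auto
      obtain Zl r where Zl: "Zl \<in> ctrl U" "strict_mono r" "(Z \<circ> r) \<longlonglongrightarrow> Zl"
        using compact_imp_seq_compact[OF ctrl_compact[OF \<open>compact U\<close>]] Zc
        unfolding seq_compact_def by metis
      define \<Omega> where "\<Omega> j = (\<lambda>i. Zl (prod_encode (j,i)))" for j
      have \<Omega>c: "\<Omega> j \<in> ctrl U" for j using Zl(1) unfolding \<Omega>_def ctrl_def by auto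
      have Wlim: "(\<lambda>m. W (r m) j) \<longlonglongrightarrow> \<Omega> j" for j
      proof -
        have "(\<lambda>m. (\<lambda>i. (Z \<circ> r) m (prod_encode (j,i)))) \<longlonglongrightarrow> \<Omega> j"
          unfolding \<Omega>_def
          by (rule continuous_on_tendsto_compose[OF comp_cont Zl(3)]) auto
        moreover have "(\<lambda>i. (Z \<circ> r) m (prod_encode (j,i))) = W (r m) j" for m
          by (simp add: Z_def)
        ultimately show ?thesis by simp
      qed
      have key: "\<exists>j<N. \<forall>k\<ge>1. avg_dist F Q k y (\<Omega> j) \<le> \<epsilon>/2" if y: "y \<in> Q" for y
      proof -
        have "\<forall>m. \<exists>j. j < N \<and> y \<in> Qhat F Q (Suc (r m)) (\<epsilon>/2) (W (r m) j)"
          using cover[OF y] by blast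
        then obtain J where J: "\<And>m. J m < N"
          "\<And>m. y \<in> Qhat F Q (Suc (r m)) (\<epsilon>/2) (W (r m) (J m))" by metis
        have "finite (J ` UNIV)" using J(1) by (meson finite_lessThan finite_subset image_subsetI lessThan_iff)
        from pigeonhole_infinite[OF infinite_UNIV_nat this] obtain m0
          where inf: "infinite {m. J m = J m0}" by auto
        define j where "j = J m0"
        have "avg_dist F Q k y (\<Omega> j) \<le> \<epsilon>/2" if k: "k \<ge> 1" for k
        proof (rule ccontr)
          assume "\<not> ?thesis"
          hence "\<epsilon>/2 < avg_dist F Q k y (\<Omega> j)" by simp
          from order_tendstoD(1)[OF avg_tendsto[OF assms(3) Wlim Wc \<Omega>c] this]
          obtain M where M: "\<And>m. m \<ge> M \<Longrightarrow> \<epsilon>/2 < avg_dist F Q k y (W (r m) j)"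
            unfolding eventually_sequentially by blast
          from inf obtain m where m: "J m = j" "m \<ge> max M k"
            unfolding j_def infinite_nat_iff_unbounded_le by blast
          have "m \<le> r m" using seq_suble[OF Zl(2)] by blast
          hence "k \<in> {1..Suc (r m)}" using m k by auto
          with J(2)[of m] m have "avg_dist F Q k y (W (r m) j) < \<epsilon>/2"
            by (auto simp: Qhat_iff)
          with M[of m] m show False by auto
        qed
        moreover have "j < N" using J(1) unfolding j_def by blast
        ultimately show ?thesis by blast
      qed
      show "\<exists>\<delta>>0. \<exists>S. finite S \<and> S \<subseteq> ctrl U \<and>
        (\<forall>y \<in> ball x \<delta> \<inter> Q. \<exists>\<omega>\<in>S. \<forall>n\<ge>1. avg_dist F Q n y \<omega> < \<epsilon>)"
      proof (intro exI[of _ "1::real"] exI[of _ "\<Omega> ` {..<N}"] conjI ballI)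
        fix y assume "y \<in> ball x 1 \<inter> Q"
        then obtain j where "j < N" "\<forall>k\<ge>1. avg_dist F Q k y (\<Omega> j) \<le> \<epsilon>/2" using key by blast
        then show "\<exists>\<omega>\<in>\<Omega> ` {..<N}. \<forall>n\<ge>1. avg_dist F Q n y \<omega> < \<epsilon>"
          using \<open>\<epsilon> > 0\<close> by (intro bexI[of _ "\<Omega> j"]) force+
      qed (use \<Omega>c in auto)
    qed
  qed
qed
end
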